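(* Let $M$ be a finite set of alternatives, $\mathcal{R}$ the set of weak preference orders on $M$, and $\varphi:\mathcal{R}\to\Delta(M)$ a mechanism. If $\varphi$ is strategyproof, then it is separation upper invariant and separation lower invariant.
   Context: A preference order is a complete, transitive relation $R$ on $M$; $a\,I\,b$ means $a\,R\,b$ and $b\,R\,a$; $a\,P\,b$ means $a\,R\,b$ and not $b\,R\,a$. Write $R$ as $M_1\,P\,\cdots\,P\,M_K$ where $(M_k)$ are the nonempty indifference classes ordered so that $a\,P\,b$ for $a\in M_k$, $b\in M_{k'}$, $k<k'$. For $A\subseteq M$, $\varphi_A(R)=\sum_{a\in A}(\varphi(R))_a$. A lottery $x$ first order-stochastically dominates $y$ at $R$ if $\sum_{j: j R a}x_j\ge\sum_{j: j R a}y_j$ for all $a\in M$. $\varphi$ is strategyproof if $\varphi(R)$ first order-stochastically dominates $\varphi(R')$ at $R$ for all $R,R'\in\mathcal{R}$. A separation is a pair $(R,R')$ such that, with $R=M_1\,P\,\cdots\,P\,M_K$, there are $\kappa\in\{1,\dots,K\}$ and a partition of $M_\kappa$ into disjoint nonempty $M_\kappa^1,M_\kappa^2$ with $R'=M_1\,P'\,\cdots\,P'\,M_{\kappa-1}\,P'\,M_\kappa^1\,P'\,M_\kappa^2\,P'\,M_{\kappa+1}\,P'\,\cdots\,P'\,M_K$ (indifference within each listed set). $\varphi$ is separation upper invariant if for every separation $(R,R')$, $\varphi_{M_k}(R)=\varphi_{M_k}(R')$ for all $k\in\{1,\dots,\kappa-1\}$; separation lower invariant if for every separation, $\varphi_{M_k}(R)=\varphi_{M_k}(R')$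 for all $k\in\{\kappa+1,\dots,K\}$. *)

theory Defs
  imports Complex_Main
begin

text \<open>Alternatives: a finite type 'a (so M = UNIV). A (weak) preference order is a
complete, transitive relation on M, represented as a binary predicate.\<close>

definition pref_orders :: "('a \<Rightarrow> 'a \<Rightarrow> bool) set" where
  "pref_orders = {R. (\<forall>a b. R a b \<or> R b a) \<and> (\<forall>a b c. R a b \<longrightarrow> R b c \<longrightarrow> R a c)}"

definition indiff :: "('a \<Rightarrow> 'a \<Rightarrow> bool) \<Rightarrow> 'a \<Rightarrow> 'a \<Rightarrow> bool" where
  "indiff R a b \<longleftrightarrow> R a b \<and> R b a"

definition strict :: "('a \<Rightarrow> 'a \<Rightarrow> bool) \<Rightarrow> 'a \<Rightarrow> 'a \<Rightarrow> bool" where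
  "strict R a b \<longleftrightarrow> R a b \<and> \<not> R b a"

definition ind_class :: "('a \<Rightarrow> 'a \<Rightarrow> bool) \<Rightarrow> 'a \<Rightarrow> 'a set" where
  "ind_class R a = {b. indiff R a b}"

definition lotteries :: "('a::finite \<Rightarrow> real) set" where
  "lotteries = {x. (\<forall>a. x a \<ge> 0) \<and> (\<Sum>a\<in>UNIV. x a) = 1}"

definition mechanism :: "(('a::finite \<Rightarrow> 'a \<Rightarrow> bool) \<Rightarrow> ('a \<Rightarrow> real)) \<Rightarrow> bool" where
  "mechanism \<phi> \<longleftrightarrow> (\<forall>R\<in>pref_orders. \<phi> R \<in> lotteries)"

definition phiA :: "(('a \<Rightarrow> 'a \<Rightarrow> bool) \<Rightarrow> ('a \<Rightarrow> real)) \<Rightarrow> 'a set \<Rightarrow> ('a \<Rightarrow> 'a \<Rightarrow> bool) \<Rightarrow> real" where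
  "phiA \<phi> A R = (\<Sum>a\<in>A. \<phi> R a)"

definition fosd :: "('a::finite \<Rightarrow> 'a \<Rightarrow> bool) \<Rightarrow> ('a \<Rightarrow> real) \<Rightarrow> ('a \<Rightarrow> real) \<Rightarrow> bool" where
  "fosd R x y \<longleftrightarrow> (\<forall>a. (\<Sum>j\<in>{j. R j a}. x j) \<ge> (\<Sum>j\<in>{j. R j a}. y j))"

definition strategyproof :: "(('a::finite \<Rightarrow> 'a \<Rightarrow> bool) \<Rightarrow> ('a \<Rightarrow> real)) \<Rightarrow> bool" where
  "strategyproof \<phi> \<longleftrightarrow> (\<forall>R\<in>pref_orders. \<forall>R'\<in>pref_orders. fosd R (\<phi> R) (\<phi> R'))"

text \<open>(R,R') is a separation splitting the indifference class C = M_kappa of R into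
C1 (ranked strictly above) and C2; everything else unchanged.\<close>
definition separation :: "('a \<Rightarrow> 'a \<Rightarrow> bool) \<Rightarrow> ('a \<Rightarrow> 'a \<Rightarrow> bool) \<Rightarrow> 'a set \<Rightarrow> 'a set \<Rightarrow> 'a set \<Rightarrow> bool" where
  "separation R R' C C1 C2 \<longleftrightarrow>
     R \<in> pref_orders \<and> (\<exists>c. C = ind_class R c) \<and>
     C1 \<noteq> {} \<and> C2 \<noteq> {} \<and> C1 \<inter> C2 = {} \<and> C1 \<union> C2 = C \<and>
     (\<forall>x y. R' x y \<longleftrightarrow> (if x \<in> C \<and> y \<in> C then x \<in> C1 \<or> y \<in> C2 else R x y))"

definition sep_upper_invariant :: "(('a \<Rightarrow> 'a \<Rightarrow> bool) \<Rightarrow> ('a \<Rightarrow> real)) \<Rightarrow> bool" where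
  "sep_upper_invariant \<phi> \<longleftrightarrow> (\<forall>R R' C C1 C2. separation R R' C C1 C2 \<longrightarrow>
     (\<forall>b c. c \<in> C \<and> strict R b c \<longrightarrow> phiA \<phi> (ind_class R b) R = phiA \<phi> (ind_class R b) R'))"

definition sep_lower_invariant :: "(('a \<Rightarrow> 'a \<Rightarrow> bool) \<Rightarrow> ('a \<Rightarrow> real)) \<Rightarrow> bool" where
  "sep_lower_invariant \<phi> \<longleftrightarrow> (\<forall>R R' C C1 C2. separation R R' C C1 C2 \<longrightarrow>
     (\<forall>b c. c \<in> C \<and> strict R c b \<longrightarrow> phiA \<phi> (ind_class R b) R = phiA \<phi> (ind_class R b) R'))"

end

theory Submission
  imports Defs
begin

lemma lowest_ex:
  assumes R: "R \<in> pref_orders" and fin: "finite A" and ne: "A \<noteq> {}"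
  shows "\<exists>a\<in>A. \<forall>j\<in>A. R j a"
  using fin ne
proof (induction A rule: finite_ne_induct)
  case (singleton x)
  then show ?case using R unfolding pref_orders_def by auto
next
  case (insert x F)
  then obtain a where a: "a \<in> F" "\<forall>j\<in>F. R j a" by auto
  show ?case
  proof (cases "R x a")
    case True then show ?thesis using a by auto
  next
    case False
    then have "R a x" using R unfolding pref_orders_def by auto
    then have "\<forall>j\<in>insert x F. R j x" using a R unfolding pref_orders_def by blast
    then show ?thesis by auto
  qed
qed

lemma sep_pref:
  assumes "separation R R' C C1 C2"
  shows "R' \<in> pref_orders"
proof -
  from assms have R: "R \<in> pref_orders" and dis: "C1 \<inter> C2 = {}" and un: "C1 \<union> C2 = C"
    and R': "\<And>x y. R' x y \<longleftrightarrow> (if x \<in> C \<and> y \<in> C then x \<in> C1 \<or> y \<in> C2 else R x y)"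
    and Cc: "\<exists>c. C = ind_class R c"
    unfolding separation_def by auto
  from Cc obtain c where c: "C = ind_class R c" by auto
  have tot: "\<And>a b. R a b \<or> R b a" and tr: "\<And>a b d. R a b \<Longrightarrow> R b d \<Longrightarrow> R a d"
    using R unfolding pref_orders_def by blast+
  have memC: "\<And>x. x \<in> C \<longleftrightarrow> R c x \<and> R x c" using c unfolding ind_class_def indiff_def by auto
  have "\<forall>a b. R' a b \<or> R' b a"
    using un tot unfolding R' by auto
  moreover have "\<forall>a b d. R' a b \<longrightarrow> R' b d \<longrightarrow> R' a d"
  proof (intro allI impI)
    fix a b d assume ab: "R' a b" and bd: "R' b d"
    have rab: "R a b"
    proof (cases "a \<in> C \<and> b \<in> C")
      case True then show ?thesis using memC tr by blast
    next
      case False then show ?thesis using ab R'[of a b] by simp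
    qed
    have rbd: "R b d"
    proof (cases "b \<in> C \<and> d \<in> C")
      case True then show ?thesis using memC tr by blast
    next
      case False then show ?thesis using bd R'[of b d] by simp
    qed
    show "R' a d"
      unfolding R' using ab bd rab rbd tr memC dis un unfolding R'
      by (smt (verit) Int_iff UnI1 UnI2 empty_iff)
  qed
  ultimately show ?thesis unfolding pref_orders_def by blast
qed

theorem lemma1:
  fixes \<phi> :: "('a::finite \<Rightarrow> 'a \<Rightarrow> bool) \<Rightarrow> ('a \<Rightarrow> real)"
  assumes "mechanism \<phi>" and "strategyproof \<phi>"
  shows "sep_upper_invariant \<phi> \<and> sep_lower_invariant \<phi>"
proof -
  have key: "phiA \<phi> (ind_class R b) R = phiA \<phi> (ind_class R b) R'"
    if sep: "separation R R' C C1 C2" for R R' C C1 C2 and b :: 'a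
  proof -
    from sep have R: "R \<in> pref_orders" and dis: "C1 \<inter> C2 = {}" and un: "C1 \<union> C2 = C"
      and R': "\<And>x y. R' x y \<longleftrightarrow> (if x \<in> C \<and> y \<in> C then x \<in> C1 \<or> y \<in> C2 else R x y)"
      and Cc: "\<exists>c. C = ind_class R c" and ne2: "C2 \<noteq> {}"
      unfolding separation_def by auto
    have R'p: "R' \<in> pref_orders" using sep_pref[OF sep] .
    from Cc obtain c where c: "C = ind_class R c" by auto
    from ne2 obtain c2 where c2: "c2 \<in> C2" by auto
    have tot: "\<And>a b. R a b \<or> R b a" and tr: "\<And>a b d. R a b \<Longrightarrow> R b d \<Longrightarrow> R a d"
      using R unfolding pref_orders_def by blast+
    have memC: "\<And>x. x \<in> C \<longleftrightarrow> R c x \<and> R x c" using c unfolding ind_class_def indiff_def by auto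
    have c2C: "c2 \<in> C" using c2 un by auto
    have U1: "{j. R j a} = {j. R' j a}" if "a \<notin> C1" for a
    proof -
      have "R j a = R' j a" for j
      proof (cases "j \<in> C \<and> a \<in> C")
        case True
        then have "a \<in> C2" using that un by blast
        moreover have "R j a" using True memC tr by blast
        ultimately show ?thesis using True R'[of j a] by simp
      next
        case False then show ?thesis using R'[of j a] by (metis (full_types))
      qed
      then show ?thesis by blast
    qed
    have U2: "(\<Sum>j\<in>{j. R j a}. \<phi> R j) = (\<Sum>j\<in>{j. R j a}. \<phi> R' j)" if "a \<notin> C1" for a
    proof -
      have "(\<Sum>j\<in>{j. R j a}. \<phi> R j) \<ge> (\<Sum>j\<in>{j. R j a}. \<phi> R' j)"
        using assms(2) R R'p unfolding strategyproof_def fosd_def by blast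
      moreover have "(\<Sum>j\<in>{j. R' j a}. \<phi> R' j) \<ge> (\<Sum>j\<in>{j. R' j a}. \<phi> R j)"
        using assms(2) R R'p unfolding strategyproof_def fosd_def by blast
      ultimately show ?thesis using U1[OF that] by simp
    qed
    have U: "(\<Sum>j\<in>{j. R j a}. \<phi> R j) = (\<Sum>j\<in>{j. R j a}. \<phi> R' j)" for a
    proof (cases "a \<in> C1")
      case False then show ?thesis using U2 by auto
    next
      case True
      then have "a \<in> C" using un by auto
      then have "{j. R j a} = {j. R j c2}" using c2C memC tr by blast
      moreover have "c2 \<notin> C1" using c2 dis by auto
      ultimately show ?thesis using U2 by simp
    qed
    define S where "S = {j. strict R j b}"
    have SU: "S \<subseteq> {j. R j b}" unfolding S_def strict_def by auto
    have IC: "ind_class R b = {j. R j b} - S"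
      unfolding S_def strict_def ind_class_def indiff_def using tot by auto
    have SS: "(\<Sum>j\<in>S. \<phi> R j) = (\<Sum>j\<in>S. \<phi> R' j)"
    proof (cases "S = {}")
      case True then show ?thesis by simp
    next
      case False
      then obtain a where a: "a \<in> S" "\<forall>j\<in>S. R j a" using lowest_ex[OF R, of S] by auto
      have "S = {j. R j a}"
      proof
        show "S \<subseteq> {j. R j a}" using a by auto
        show "{j. R j a} \<subseteq> S" using a tr unfolding S_def strict_def by blast
      qed
      then show ?thesis using U by simp
    qed
    show ?thesis unfolding phiA_def IC
      using sum_diff[OF finite SU, of "\<phi> R"] sum_diff[OF finite SU, of "\<phi> R'"] SS U[of b]
      by simp
  qed
  show ?thesis unfolding sep_upper_invariant_def sep_lower_invariant_def using key by blast
qed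

end
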